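(* Let $\mathcal{T}$ be a directed poset, $X:\mathcal{T}\to\mathbf{Set}_*$ a diagram of pointed sets and $A$ a torsion-free abelian group. Then $H(X,A)$ is torsion free.
   Context: A directed poset $\mathcal{T}$ is regarded as a category with a single morphism $t\to s$ whenever $t\ge s$. For a pointed set $Y$, $Y\wedge A:=\bigoplus_{Y\setminus\{*\}}A$ (finitely supported pointed maps $Y\to A$), functorial in pointed maps via $f_*(sv)=f(s)v$, where $sv$ is the element with value $v$ at $s$ ($*v=0$). Define $G(X,A):=\lim_\mathcal{T}(X\wedge A)$, let $K(X,A)$ be the image of the injective natural map $\rho:(\lim_\mathcal{T}X)\wedge A\to G(X,A)$, $\rho(xv)(t)=x(t)v$, and $H(X,A):=G(X,A)/K(X,A)=\mathrm{coker}\,\rho$. *)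

theory Defs
  imports Main
begin

definition nmul :: "nat \<Rightarrow> 'a::ab_group_add \<Rightarrow> 'a" where
  "nmul n a = (\<Sum>_<n. a)"

definition torsion_free_group :: "'a::ab_group_add itself \<Rightarrow> bool" where
  "torsion_free_group _ \<longleftrightarrow> (\<forall>(n::nat) (a::'a). n > 0 \<longrightarrow> nmul n a = 0 \<longrightarrow> a = 0)"

definition directed :: "'t::order itself \<Rightarrow> bool" where
  "directed _ \<longleftrightarrow> (\<forall>a b :: 't. \<exists>c. a \<le> c \<and> b \<le> c)"

(* A diagram T -> Set_* : pointed sets X t with basepoint p t, and for s \<le> t
   (the morphism t -> s) a pointed map f t s : X t -> X s, functorially. *)
definition pointed_diagram ::
  "('t::order \<Rightarrow> 'x set) \<Rightarrow> ('t \<Rightarrow> 'x) \<Rightarrow> ('t \<Rightarrow> 't \<Rightarrow> 'x \<Rightarrow> 'x) \<Rightarrow> bool" where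
  "pointed_diagram X p f \<longleftrightarrow>
     (\<forall>t. p t \<in> X t) \<and>
     (\<forall>t s. s \<le> t \<longrightarrow> f t s ` X t \<subseteq> X s \<and> f t s (p t) = p s) \<and>
     (\<forall>t. \<forall>x\<in>X t. f t t x = x) \<and>
     (\<forall>t s r. r \<le> s \<longrightarrow> s \<le> t \<longrightarrow> (\<forall>x\<in>X t. f s r (f t s x) = f t r x))"

(* Y \<wedge> A : finitely supported pointed maps Y -> A (basepoint q) *)
definition smash :: "'x set \<Rightarrow> 'x \<Rightarrow> ('x \<Rightarrow> 'a::zero) set" where
  "smash Y q = {v. finite {y. v y \<noteq> 0} \<and> (\<forall>y. v y \<noteq> 0 \<longrightarrow> y \<in> Y \<and> y \<noteq> q)}"

(* functoriality: g_*(s v) = g(s) v, extended additively; q' is the target basepoint *)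
definition push :: "'y \<Rightarrow> ('x \<Rightarrow> 'y) \<Rightarrow> ('x \<Rightarrow> 'a::comm_monoid_add) \<Rightarrow> 'y \<Rightarrow> 'a" where
  "push q' g v = (\<lambda>z. if z = q' then 0 else (\<Sum>y\<in>{y. v y \<noteq> 0 \<and> g y = z}. v y))"

definition limX :: "('t::order \<Rightarrow> 'x set) \<Rightarrow> ('t \<Rightarrow> 't \<Rightarrow> 'x \<Rightarrow> 'x) \<Rightarrow> ('t \<Rightarrow> 'x) set" where
  "limX X f = {x. (\<forall>t. x t \<in> X t) \<and> (\<forall>t s. s \<le> t \<longrightarrow> f t s (x t) = x s)}"

(* G(X,A) = lim_T (X \<wedge> A) *)
definition G :: "('t::order \<Rightarrow> 'x set) \<Rightarrow> ('t \<Rightarrow> 'x) \<Rightarrow> ('t \<Rightarrow> 't \<Rightarrow> 'x \<Rightarrow> 'x)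
                 \<Rightarrow> ('t \<Rightarrow> 'x \<Rightarrow> 'a::comm_monoid_add) set" where
  "G X p f = {g. (\<forall>t. g t \<in> smash (X t) (p t)) \<and>
                 (\<forall>t s. s \<le> t \<longrightarrow> push (p s) (f t s) (g t) = g s)}"

(* rho : (lim X) \<wedge> A -> G(X,A), rho(x v)(t) = x(t) v *)
definition rho :: "('t \<Rightarrow> 'x) \<Rightarrow> (('t \<Rightarrow> 'x) \<Rightarrow> 'a::comm_monoid_add) \<Rightarrow> 't \<Rightarrow> 'x \<Rightarrow> 'a" where
  "rho p \<phi> = (\<lambda>t. push (p t) (\<lambda>x. x t) \<phi>)"

definition K :: "('t::order \<Rightarrow> 'x set) \<Rightarrow> ('t \<Rightarrow> 'x) \<Rightarrow> ('t \<Rightarrow> 't \<Rightarrow> 'x \<Rightarrow> 'x)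
                 \<Rightarrow> ('t \<Rightarrow> 'x \<Rightarrow> 'a::comm_monoid_add) set" where
  "K X p f = rho p ` smash (limX X f) p"

(* H(X,A) = G/K is torsion free: n[g] = 0 in G/K (n > 0) implies [g] = 0 *)
definition H_torsion_free :: "('t::order \<Rightarrow> 'x set) \<Rightarrow> ('t \<Rightarrow> 'x) \<Rightarrow> ('t \<Rightarrow> 't \<Rightarrow> 'x \<Rightarrow> 'x)
                 \<Rightarrow> 'a::ab_group_add itself \<Rightarrow> bool" where
  "H_torsion_free X p f _ \<longleftrightarrow>
     (\<forall>(g :: 't \<Rightarrow> 'x \<Rightarrow> 'a) \<in> G X p f. \<forall>n::nat. n > 0 \<longrightarrow> (\<lambda>t y. nmul n (g t y)) \<in> K X p f \<longrightarrow> g \<in> K X p f)"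

end

theory Submission
  imports Defs
begin

lemma nmul_sum: "nmul n (sum h S) = sum (\<lambda>y. nmul n (h y)) S"
  unfolding nmul_def by (rule sum.swap)

lemma nmul_diff: "nmul n (a - b) = nmul n a - nmul n b"
  unfolding nmul_def by (simp add: sum_subtractf)

lemma nmul_zero[simp]: "nmul n 0 = 0"
  unfolding nmul_def by simp

lemma upper_bound:
  assumes d: "directed TYPE('t::order)" and fin: "finite (F::'t set)"
  shows "\<exists>c. \<forall>s\<in>F. s \<le> c"
  using fin
proof (induction F rule: finite_induct)
  case empty then show ?case by simp
next
  case (insert a F)
  then obtain c where c: "\<forall>s\<in>F. s \<le> c" by blast
  from d obtain e where "a \<le> e" "c \<le> e" unfolding directed_def by blast
  with c show ?case by (metis insert_iff order_trans)
qed

lemma push_eq: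
  assumes "finite S" "{x. h x \<noteq> 0} \<subseteq> S"
  shows "push q g h z = (if z = q then 0 else (\<Sum>x\<in>{x\<in>S. g x = z}. h x))"
  unfolding push_def
  by (auto intro!: sum.mono_neutral_left simp: assms(1)) (use assms(2) in auto)

theorem mainTheorem9:
  fixes X :: "'t::order \<Rightarrow> 'x set" and p :: "'t \<Rightarrow> 'x" and f :: "'t \<Rightarrow> 't \<Rightarrow> 'x \<Rightarrow> 'x"
  assumes "directed TYPE('t)"
    and "pointed_diagram X p f"
    and "torsion_free_group TYPE('a::ab_group_add)"
  shows "H_torsion_free X p f TYPE('a)"
  unfolding H_torsion_free_def
proof (intro ballI allI impI)
  fix g :: "'t \<Rightarrow> 'x \<Rightarrow> 'a" and n :: nat
  assume n: "n > 0" and gK: "(\<lambda>t y. nmul n (g t y)) \<in> K X p f"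
  from gK obtain \<phi> where phi: "\<phi> \<in> smash (limX X f) p"
    and eq: "(\<lambda>t y. nmul n (g t y)) = rho p \<phi>" unfolding K_def by blast
  define S where "S = {x. \<phi> x \<noteq> 0}"
  have finS: "finite S" and Sl: "\<And>x. x \<in> S \<Longrightarrow> x \<in> limX X f \<and> x \<noteq> p"
    using phi unfolding smash_def S_def by auto
  have pp: "\<And>s t. s \<le> t \<Longrightarrow> f t s (p t) = p s"
    using assms(2) unfolding pointed_diagram_def by blast
  have canc: "\<And>a b::'a. nmul n a = nmul n b \<Longrightarrow> a = b"
  proof -
    fix a b :: 'a assume "nmul n a = nmul n b"
    then have "nmul n (a - b) = 0" by (simp add: nmul_diff)
    then have "a - b = 0" using assms(3) n unfolding torsion_free_group_def by blast
    then show "a = b" by simp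
  qed
  have ex: "\<exists>w. nmul n w = \<phi> x" if xS: "x \<in> S" for x
  proof -
    have "\<forall>x'\<in>S - {x}. \<exists>s. x' s \<noteq> x s" by (metis DiffE insertI1 ext)
    then obtain sx where sx: "\<forall>x'\<in>S - {x}. x' (sx x') \<noteq> x (sx x')" by metis
    from Sl[OF xS] obtain s0 where s0: "x s0 \<noteq> p s0" by (metis ext)
    obtain c where c: "\<forall>s\<in>insert s0 (sx ` (S - {x})). s \<le> c"
      using upper_bound[OF assms(1), of "insert s0 (sx ` (S - {x}))"] finS by blast
    have lim: "\<And>y s t. y \<in> S \<Longrightarrow> s \<le> t \<Longrightarrow> f t s (y t) = y s"
      using Sl unfolding limX_def by blast
    have xc: "x c \<noteq> p c" using c s0 lim[OF xS, of s0 c] pp[of s0 c] by auto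
    have dif: "x' c \<noteq> x c" if "x' \<in> S - {x}" for x'
    proof
      assume e: "x' c = x c"
      have le: "sx x' \<le> c" using c that by blast
      have "x' (sx x') = x (sx x')"
        using lim[OF xS le] lim[OF _ le, of x'] that e by auto
      then show False using sx that by blast
    qed
    have "{y\<in>S. y c = x c} = {x}" using dif xS by auto
    then have "rho p \<phi> c (x c) = \<phi> x"
      unfolding rho_def using push_eq[OF finS, of \<phi> "p c" "\<lambda>y. y c" "x c"] xc
      by (simp add: S_def)
    then have "nmul n (g c (x c)) = \<phi> x" using eq by metis
    then show ?thesis by blast
  qed
  define \<psi> where "\<psi> x = (if x \<in> S then (SOME w. nmul n w = \<phi> x) else 0)" for x
  have npsi: "nmul n (\<psi> x) = \<phi> x" for x
  proof (cases "x \<in> S")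
    case True then show ?thesis unfolding \<psi>_def using someI_ex[OF ex[OF True]] by simp
  next
    case False then show ?thesis unfolding \<psi>_def S_def by simp
  qed
  have supp: "{x. \<psi> x \<noteq> 0} \<subseteq> S" unfolding \<psi>_def by auto
  have psi: "\<psi> \<in> smash (limX X f) p"
    unfolding smash_def using supp finS Sl by (auto intro: finite_subset)
  have "g = rho p \<psi>"
  proof (intro ext)
    fix t y
    have "nmul n (g t y) = rho p \<phi> t y" using eq by metis
    also have "\<dots> = nmul n (rho p \<psi> t y)"
    proof -
      have s1: "{x. \<phi> x \<noteq> 0} \<subseteq> S" by (simp add: S_def)
      show ?thesis unfolding rho_def
        unfolding push_eq[OF finS s1] push_eq[OF finS supp]
        by (simp add: nmul_sum npsi)
    qed
    finally show "g t y = rho p \<psi> t y" by (rule canc)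
  qed
  then show "g \<in> K X p f" unfolding K_def using psi by blast
qed

end
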